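(* Let $P$ be an absolutely continuous distribution on $\mathbb R^{d+1}$ with strictly positive density function, let $(\mathbf X_i,Y_i)_{i\ge1}$ be i.i.d. with distribution $P$ and $P_n=\frac1n\sum_{i=1}^n\delta_{(\mathbf X_i,Y_i)}$. Then for every compact set $K\subset\Theta_{c_X,c_\varepsilon}$, $$\sup_{\theta\in K}\big|R(\theta,P_n)-R(\theta,P)\big|\to0\quad\text{almost surely}.$$
   Context: Fix integers $d\ge 1$, $G\ge 1$, a trimming level $\alpha\in[0,1)$ and constants $c_X\ge 1$, $c_\varepsilon\ge 1$. Write $\phi(\cdot;m,s^2)$ for the univariate normal density with mean $m$ and variance $s^2$, and $\phi_d(\cdot;\mu,\Sigma)$ for the $d$-variate normal density with mean $\mu$ and covariance $\Sigma$. A parameter is $\theta=(\pi_1,\dots,\pi_G,\mu_1,\dots,\mu_G,\Sigma_1,\dots,\Sigma_G,b_1^0,\dots,b_G^0,\mathbf b_1,\dots,\mathbf b_G,\sigma_1^2,\dots,\sigma_G^2)$ with $\pi_g\ge 0$, $\sum_g\pi_g=1$, $\mu_g\in\mathbb R^d$, $\Sigma_g$ a symmetric positive definite $d\times d$ matrix, $b_g^0\in\mathbb R$, $\mathbf b_g\in\mathbb R^d$, $\sigma_g^2>0$. $\Theta_{c_X,c_\varepsilon}$ is the set of such $\theta$ with $\lambda_{l_1}(\Sigma_{g_1})\le c_X\lambda_{l_2}(\Sigma_{g_2})$ for all $l_1,l_2\in\{1,\dots,d\}$, $g_1,g_2\in\{1,\dots,G\}$ (where $\lambda_l(\Sigma)$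 are the eigenvalues of $\Sigma$) and $\sigma_{g_1}^2\le c_\varepsilon\sigma_{g_2}^2$ for all $g_1,g_2$; it carries the Euclidean topology of the parameter coordinates. Set $D_g(\mathbf x,y;\theta)=\phi(y;\mathbf b_g'\mathbf x+b_g^0,\sigma_g^2)\,\phi_d(\mathbf x;\mu_g,\Sigma_g)\,\pi_g$ and $D(\mathbf x,y;\theta)=\sum_{g=1}^G D_g(\mathbf x,y;\theta)$. For a probability $Q$ on $\mathbb R^{d+1}$ with $(\mathbf X,Y)\sim Q$, define $R(\theta,Q)=\sup\{u: Q[D(\mathbf X,Y;\theta)\ge u]\ge 1-\alpha\}$. *)

theory Defs
  imports "HOL-Probability.Probability"
begin

text \<open>Parameter vector theta = (pi, mu, Sigma, b0, b, sigma2), each indexed by the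
  finite component type 'g (G = CARD('g)); covariates live in real^'n (d = CARD('n)).\<close>

type_synonym ('n, 'g) param =
  "(real^'g) \<times> ((real^'n)^'g) \<times> ((real^'n^'n)^'g) \<times> (real^'g) \<times> ((real^'n)^'g) \<times> (real^'g)"

definition mix_weight :: "('n::finite, 'g::finite) param \<Rightarrow> 'g \<Rightarrow> real" where
  "mix_weight \<theta> g = (case \<theta> of (w, m, S, b0, b, s2) \<Rightarrow> w $ g)"
definition mix_mean :: "('n::finite, 'g::finite) param \<Rightarrow> 'g \<Rightarrow> real^'n" where
  "mix_mean \<theta> g = (case \<theta> of (w, m, S, b0, b, s2) \<Rightarrow> m $ g)"
definition mix_cov :: "('n::finite, 'g::finite) param \<Rightarrow> 'g \<Rightarrow> real^'n^'n" where
  "mix_cov \<theta> g = (case \<theta> of (w, m, S, b0, b, s2) \<Rightarrow> S $ g)"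
definition mix_intercept :: "('n::finite, 'g::finite) param \<Rightarrow> 'g \<Rightarrow> real" where
  "mix_intercept \<theta> g = (case \<theta> of (w, m, S, b0, b, s2) \<Rightarrow> b0 $ g)"
definition mix_slope :: "('n::finite, 'g::finite) param \<Rightarrow> 'g \<Rightarrow> real^'n" where
  "mix_slope \<theta> g = (case \<theta> of (w, m, S, b0, b, s2) \<Rightarrow> b $ g)"
definition mix_var :: "('n::finite, 'g::finite) param \<Rightarrow> 'g \<Rightarrow> real" where
  "mix_var \<theta> g = (case \<theta> of (w, m, S, b0, b, s2) \<Rightarrow> s2 $ g)"

definition sym_pos_def :: "real^'n^'n \<Rightarrow> bool" where
  "sym_pos_def S \<longleftrightarrow> transpose S = S \<and> (\<forall>v. v \<noteq> 0 \<longrightarrow> v \<bullet> (S *v v) > 0)"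

definition mat_eigenvalues :: "real^'n^'n \<Rightarrow> real set" where
  "mat_eigenvalues S = {l. \<exists>v. v \<noteq> 0 \<and> S *v v = l *\<^sub>R v}"

definition mvn_density :: "real^'n \<Rightarrow> real^'n^'n \<Rightarrow> real^'n::finite \<Rightarrow> real" where
  "mvn_density \<mu> S x =
     exp (-(1/2) * ((x - \<mu>) \<bullet> (matrix_inv S *v (x - \<mu>))))
     / sqrt ((2 * pi) ^ CARD('n) * det S)"

definition Theta :: "real \<Rightarrow> real \<Rightarrow> ('n::finite, 'g::finite) param set" where
  "Theta cX ce = {\<theta>.
     (\<forall>g. mix_weight \<theta> g \<ge> 0) \<and> (\<Sum>g\<in>UNIV. mix_weight \<theta> g) = 1 \<and>
     (\<forall>g. sym_pos_def (mix_cov \<theta> g)) \<and> (\<forall>g. mix_var \<theta> g > 0) \<and>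
     (\<forall>g1 g2. \<forall>l1\<in>mat_eigenvalues (mix_cov \<theta> g1). \<forall>l2\<in>mat_eigenvalues (mix_cov \<theta> g2).
        l1 \<le> cX * l2) \<and>
     (\<forall>g1 g2. mix_var \<theta> g1 \<le> ce * mix_var \<theta> g2)}"

definition Dg :: "('n::finite, 'g::finite) param \<Rightarrow> 'g \<Rightarrow> real^'n \<Rightarrow> real \<Rightarrow> real" where
  "Dg \<theta> g x y =
     normal_density (mix_slope \<theta> g \<bullet> x + mix_intercept \<theta> g) (sqrt (mix_var \<theta> g)) y
     * mvn_density (mix_mean \<theta> g) (mix_cov \<theta> g) x * mix_weight \<theta> g"

definition Dmix :: "('n::finite, 'g::finite) param \<Rightarrow> real^'n \<Rightarrow> real \<Rightarrow> real" where
  "Dmix \<theta> x y = (\<Sum>g\<in>UNIV. Dg \<theta> g x y)"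

text \<open>Trimmed level R(theta,Q); Q is given through its set function A \<mapsto> Q[A].\<close>
definition trim_level :: "real \<Rightarrow> (((real^'n) \<times> real) set \<Rightarrow> real)
     \<Rightarrow> ('n::finite, 'g::finite) param \<Rightarrow> real" where
  "trim_level \<alpha> Q \<theta> = Sup {u. Q {(x, y). Dmix \<theta> x y \<ge> u} \<ge> 1 - \<alpha>}"

definition empirical :: "(nat \<Rightarrow> 'z) \<Rightarrow> nat \<Rightarrow> 'z set \<Rightarrow> real" where
  "empirical Z n A = real (card {i\<in>{1..n}. Z i \<in> A}) / real n"

end

theory Submission
  imports Defs
begin



lemma continuous_on_vec_nth'[continuous_intros]:
  "continuous_on S f \<Longrightarrow> continuous_on S (\<lambda>x. f x $ i)"
  unfolding continuous_on_def by (auto intro: tendsto_vec_nth)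

lemma continuous_on_vec_lambda'[continuous_intros]:
  "(\<And>i. continuous_on S (\<lambda>x. f x i)) \<Longrightarrow> continuous_on S (\<lambda>x. \<chi> i. f x i)"
  unfolding continuous_on_def by (auto intro!: vec_tendstoI)

lemma continuous_on_det'[continuous_intros]:
  fixes f :: "'a::topological_space \<Rightarrow> real^'n::finite^'n"
  shows "continuous_on S f \<Longrightarrow> continuous_on S (\<lambda>x. det (f x))"
  unfolding det_def by (intro continuous_intros)

lemma mix_eqs:
  "mix_weight \<theta> g = fst \<theta> $ g"
  "mix_mean \<theta> g = fst (snd \<theta>) $ g"
  "mix_cov \<theta> g = fst (snd (snd \<theta>)) $ g"
  "mix_intercept \<theta> g = fst (snd (snd (snd \<theta>))) $ g"
  "mix_slope \<theta> g = fst (snd (snd (snd (snd \<theta>)))) $ g"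
  "mix_var \<theta> g = snd (snd (snd (snd (snd \<theta>)))) $ g"
  by (cases \<theta>; auto simp: mix_weight_def mix_mean_def mix_cov_def mix_intercept_def mix_slope_def mix_var_def)+




lemma posdef_det_nz:
  fixes S :: "real^'n::finite^'n"
  assumes "sym_pos_def S" shows "det S \<noteq> 0"
proof -
  have "inj ((*v) S)"
  proof (rule injI)
    fix u v assume "S *v u = S *v v"
    then have "S *v (u - v) = 0" by (simp add: matrix_vector_mult_diff_distrib)
    then have "(u - v) \<bullet> (S *v (u - v)) = 0" by simp
    then have "u - v = 0" using assms unfolding sym_pos_def_def by (metis order_less_irrefl)
    then show "u = v" by simp
  qed
  then show ?thesis
    using det_nz_iff_inj[OF matrix_vector_mul_linear[of S]] by (simp add: matrix_of_matrix_vector_mul)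
qed

definition Mh :: "real^'n^'n \<Rightarrow> real \<Rightarrow> real^'n::finite^'n" where
  "Mh S t = (\<chi> i j. t * S$i$j + (1-t) * (if i = j then 1 else 0))"

lemma Mh_mult: "Mh S t *v v = t *\<^sub>R (S *v v) + (1-t) *\<^sub>R v"
proof -
  have "(Mh S t *v v) $ i = (t *\<^sub>R (S *v v) + (1-t) *\<^sub>R v) $ i" for i
  proof -
    have "(Mh S t *v v) $ i = (\<Sum>j\<in>UNIV. t * (S$i$j * v$j) + (1-t) * ((if i = j then 1 else 0) * v$j))"
      by (simp add: Mh_def matrix_vector_mult_def algebra_simps)
    also have "\<dots> = t * (\<Sum>j\<in>UNIV. S$i$j * v$j) + (1-t) * (\<Sum>j\<in>UNIV. (if i = j then 1 else 0) * v$j)"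
      by (simp add: sum.distrib sum_distrib_left)
    also have "(\<Sum>j\<in>UNIV. (if i = j then 1 else 0) * v$j) = v $ i"
      by (simp add: mult.commute[of "if _ then _ else _"] sum.delta if_distrib[of "\<lambda>c. v$_ * c"] cong: if_cong)
    finally show ?thesis by (simp add: matrix_vector_mult_def)
  qed
  then show ?thesis by (simp add: vec_eq_iff)
qed

lemma posdef_det_pos:
  fixes S :: "real^'n::finite^'n"
  assumes "sym_pos_def S" shows "det S > 0"
proof (rule ccontr)
  assume "\<not> det S > 0"
  then have neg: "det S \<le> 0" by simp
  have cont: "continuous_on {0..1} (\<lambda>t. det (Mh S t))"
    unfolding Mh_def by (intro continuous_intros)
  have "Mh S 0 = mat 1" by (simp add: Mh_def mat_def)
  then have h0: "det (Mh S 0) = 1" by simp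
  have "Mh S 1 = S" by (simp add: Mh_def vec_eq_iff)
  then have h1: "det (Mh S 1) \<le> 0" using neg by simp
  obtain t where t: "0 \<le> t" "t \<le> 1" "det (Mh S t) = 0"
    using IVT2'[of "\<lambda>t. det (Mh S t)" 1 0 0] h0 h1 cont by auto
  have "sym_pos_def (Mh S t) \<or> True" by simp
  have "inj ((*v) (Mh S t))"
  proof (rule injI)
    fix u v assume "Mh S t *v u = Mh S t *v v"
    then have "Mh S t *v (u - v) = 0" by (simp add: matrix_vector_mult_diff_distrib)
    then have "(u - v) \<bullet> (Mh S t *v (u - v)) = 0" by simp
    then have e: "t * ((u - v) \<bullet> (S *v (u - v))) + (1 - t) * ((u - v) \<bullet> (u - v)) = 0"
      by (simp add: Mh_mult inner_add_right)
    show "u = v"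
    proof (rule ccontr)
      assume "u \<noteq> v"
      then have p1: "(u - v) \<bullet> (S *v (u - v)) > 0" and p2: "(u - v) \<bullet> (u - v) > 0"
        using assms unfolding sym_pos_def_def by auto
      have "t * ((u - v) \<bullet> (S *v (u - v))) + (1 - t) * ((u - v) \<bullet> (u - v)) > 0"
      proof (cases "t = 0")
        case True then show ?thesis using p2 by simp
      next
        case False then show ?thesis using t p1 p2
          by (intro add_pos_nonneg) (auto intro: mult_pos_pos)
      qed
      with e show False by simp
    qed
  qed
  then have "det (Mh S t) \<noteq> 0"
    using det_nz_iff_inj[OF matrix_vector_mul_linear[of "Mh S t"]] by (simp add: matrix_of_matrix_vector_mul)
  with t show False by simp
qed

lemma matrix_inv_cramer:
  fixes S :: "real^'n::finite^'n"
  assumes "det S \<noteq> 0"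
  shows "matrix_inv S *v w = (\<chi> k. det(\<chi> i j. if j=k then w$i else S$i$j) / det S)"
proof -
  have "invertible S" using assms invertible_det_nz by blast
  then have "S ** matrix_inv S = mat 1 \<and> matrix_inv S ** S = mat 1"
    unfolding invertible_def matrix_inv_def by (rule someI_ex)
  then have "S *v (matrix_inv S *v w) = w" by (simp add: matrix_vector_mul_assoc)
  then show ?thesis using cramer[OF assms] by blast
qed




definition T0 :: "('n::finite, 'g::finite) param set" where
  "T0 = {\<theta>. \<forall>g. det (mix_cov \<theta> g) \<noteq> 0 \<and> mix_var \<theta> g > 0}"

definition Dz :: "('n::finite, 'g::finite) param \<Rightarrow> (real^'n) \<times> real \<Rightarrow> real" where
  "Dz \<theta> z = Dmix \<theta> (fst z) (snd z)"

definition cram :: "real^'n^'n \<Rightarrow> real^'n \<Rightarrow> real^'n::finite" where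
  "cram S w = (\<chi> k. det(\<chi> i j. if j=k then w$i else S$i$j) / det S)"

definition Dform :: "('n::finite, 'g::finite) param \<Rightarrow> (real^'n) \<times> real \<Rightarrow> real" where
  "Dform \<theta> z = (\<Sum>g\<in>UNIV.
     (1 / sqrt (2 * pi * mix_var \<theta> g) *
        exp (-(snd z - (mix_slope \<theta> g \<bullet> fst z + mix_intercept \<theta> g))\<^sup>2 / (2 * mix_var \<theta> g)))
     * (exp (-(1/2) * ((fst z - mix_mean \<theta> g) \<bullet> (cram (mix_cov \<theta> g) (fst z - mix_mean \<theta> g))))
         / sqrt ((2 * pi) ^ CARD('n) * det (mix_cov \<theta> g)))
     * mix_weight \<theta> g)"

lemma continuous_on_if_const[continuous_intros]:
  "continuous_on S f \<Longrightarrow> continuous_on S g \<Longrightarrow> continuous_on S (\<lambda>x. if b then f x else g x)"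
  by (cases b) auto

lemma Dz_Dform: assumes "\<theta> \<in> T0" shows "Dz \<theta> z = Dform \<theta> z"
  using assms[unfolded T0_def] apply (subgoal_tac "\<forall>g. (sqrt (mix_var \<theta> g))\<^sup>2 = mix_var \<theta> g")
  prefer 2 apply (simp add: less_imp_le)
  unfolding Dz_def Dform_def Dmix_def Dg_def normal_density_def mvn_density_def T0_def
  by (intro sum.cong refl) (auto simp: matrix_inv_cramer cram_def)

lemma cont_Dform: "continuous_on (T0 \<times> UNIV) (\<lambda>p. Dform (fst p) (snd p))"
  unfolding Dform_def mix_eqs cram_def
  apply (intro continuous_intros)
  apply (auto simp: T0_def mix_eqs)
  apply (metis less_irrefl)+
  done

lemma cont_D: "continuous_on (T0 \<times> UNIV) (\<lambda>p. Dz (fst p) (snd p))"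
  using cont_Dform by (rule continuous_on_cong[THEN iffD1, rotated 2]) (auto simp: Dz_Dform)




lemma sum_indicator_card:
  "finite I \<Longrightarrow> (\<Sum>i\<in>I. (indicator A (Z i \<omega>)::real)) = real (card {i\<in>I. Z i \<omega> \<in> A})"
  by (simp add: indicator_def sum.If_cases Int_def conj_commute)

lemma slln_upper:
  fixes Z :: "nat \<Rightarrow> 'a \<Rightarrow> 'z::topological_space"
  assumes M: "prob_space M"
    and Zm: "\<forall>i. Z i \<in> measurable M borel"
    and ind: "prob_space.indep_vars M (\<lambda>_. borel) Z UNIV"
    and dist: "\<forall>i. distr M borel (Z i) = P"
    and A: "A \<in> sets borel"
    and c: "measure P A < c"
  shows "AE \<omega> in M. \<forall>\<^sub>F n in sequentially. empirical (\<lambda>i. Z i \<omega>) n A < c"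
proof -
  interpret prob_space M by (rule M)
  have Zm'[measurable]: "Z i \<in> measurable M borel" for i using Zm by auto
  note A[measurable]
  define p where "p = measure P A"
  define \<delta> where "\<delta> = c - p"
  have \<delta>: "\<delta> > 0" using c by (simp add: \<delta>_def p_def)
  define X where "X = (\<lambda>i \<omega>. (indicator A (Z i \<omega>) :: real))"
  have Xm[measurable]: "X i \<in> borel_measurable M" for i
    unfolding X_def by measurable
  have EX: "expectation (X i) = p" for i
  proof -
    have "expectation (X i) = integral\<^sup>L (distr M borel (Z i)) (indicator A)"
      unfolding X_def using Zm A by (subst integral_distr) auto
    also have "\<dots> = measure P (A \<inter> space P)" using dist by simp
    also have "space P = UNIV" using dist by (metis space_distr space_borel)
    finally
    show ?thesis by (simp add: p_def)
  qed
  define B where "B = (\<lambda>n. {\<omega>\<in>space M. (\<Sum>i\<in>{1..n}. X i \<omega>) \<ge> real n * p + real n * \<delta>})"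
  have Bm[measurable]: "B n \<in> sets M" for n unfolding B_def by measurable
  have Bp: "measure M (B n) \<le> exp (-2 * \<delta>\<^sup>2) ^ n" for n
  proof (cases "n = 0")
    case True then show ?thesis by simp
  next
    case False
    interpret H: Hoeffding_ineq M "{1..n}" X "\<lambda>_. 0" "\<lambda>_. 1" "(\<Sum>i\<in>{1..n}. expectation (X i))"
    proof unfold_locales
      show "indep_vars (\<lambda>_. borel) X {1..n}"
        unfolding X_def
        by (rule indep_vars_compose2[OF indep_vars_subset[OF ind]]) (use A in auto)
    qed (auto simp: X_def indicator_def)
    have "measure M (B n) \<le> exp (-2 * (real n * \<delta>)\<^sup>2 / (\<Sum>i\<in>{1..n}. (1 - 0)\<^sup>2))"
      unfolding B_def using H.Hoeffding_ineq_ge[of "real n * \<delta>"] \<delta> False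
      by (simp add: EX)
    also have "\<dots> = exp (-2 * \<delta>\<^sup>2) ^ n"
      using False by (simp add: power2_eq_square exp_of_nat_mult[symmetric] field_simps)
    finally show ?thesis .
  qed
  have "summable (\<lambda>n. measure M (B n))"
    by (rule summable_comparison_test[OF _ summable_geometric[of "exp (-2 * \<delta>\<^sup>2)"]])
       (use Bp \<delta> in auto)
  then have "AE \<omega> in M. \<forall>\<^sub>F n in sequentially. \<omega> \<in> space M - B n"
    by (intro borel_cantelli_AE1) (auto simp: emeasure_eq_measure)
  then show ?thesis
  proof (rule AE_mp, intro AE_I2 impI)
    fix \<omega> assume "\<omega> \<in> space M" and ev: "\<forall>\<^sub>F n in sequentially. \<omega> \<in> space M - B n"
    show "\<forall>\<^sub>F n in sequentially. empirical (\<lambda>i. Z i \<omega>) n A < c"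
      using ev eventually_gt_at_top[of 0]
    proof (eventually_elim)
      case (elim n)
      then have "(\<Sum>i\<in>{1..n}. X i \<omega>) < real n * p + real n * \<delta>" using \<open>\<omega> \<in> space M\<close>
        by (auto simp: B_def)
      then have "real (card {i\<in>{1..n}. Z i \<omega> \<in> A}) < real n * c"
        by (simp add: X_def sum_indicator_card \<delta>_def algebra_simps)
      then show ?case using elim by (simp add: empirical_def field_simps)
    qed
  qed
qed

lemma card_filter_compl:
  assumes "finite I"
  shows "card {i\<in>I. P i} + card {i\<in>I. \<not> P i} = card I"
proof -
  have "I = {i\<in>I. P i} \<union> {i\<in>I. \<not> P i}" by auto
  then have "card I = card ({i\<in>I. P i} \<union> {i\<in>I. \<not> P i})" by simp
  also have "\<dots> = card {i\<in>I. P i} + card {i\<in>I. \<not> P i}"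
    using assms by (intro card_Un_disjoint) auto
  finally show ?thesis by simp
qed

lemma empirical_compl:
  assumes "n > 0"
  shows "empirical Z n (- A) = 1 - empirical Z n A"
proof -
  have "card {i\<in>{1..n}. Z i \<in> A} + card {i\<in>{1..n}. Z i \<notin> A} = n"
    using card_filter_compl[of "{1..n}" "\<lambda>i. Z i \<in> A"] by simp
  then have "real (card {i\<in>{1..n}. Z i \<notin> A}) = real n - real (card {i\<in>{1..n}. Z i \<in> A})"
    by linarith
  then show ?thesis using assms by (simp add: empirical_def field_simps)
qed

lemma slln_lower:
  fixes Z :: "nat \<Rightarrow> 'a \<Rightarrow> 'z::topological_space"
  assumes M: "prob_space M"
    and Zm: "\<forall>i. Z i \<in> measurable M borel"
    and ind: "prob_space.indep_vars M (\<lambda>_. borel) Z UNIV"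
    and dist: "\<forall>i. distr M borel (Z i) = P"
    and PP: "prob_space P"
    and A: "A \<in> sets borel"
    and c: "measure P A > c"
  shows "AE \<omega> in M. \<forall>\<^sub>F n in sequentially. empirical (\<lambda>i. Z i \<omega>) n A > c"
proof -
  interpret P: prob_space P by (rule PP)
  have sP: "sets P = sets borel" using dist by (metis sets_distr)
  have spP: "space P = UNIV" using dist by (metis space_distr space_borel)
  have "measure P (- A) = 1 - measure P A"
    using P.prob_compl[of A] A sP spP by (simp add: Compl_eq_Diff_UNIV)
  then have "measure P (- A) < 1 - c" using c by simp
  then have "AE \<omega> in M. \<forall>\<^sub>F n in sequentially. empirical (\<lambda>i. Z i \<omega>) n (- A) < 1 - c"
    using A by (intro slln_upper[OF M Zm ind dist]) auto
  then show ?thesis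
  proof (rule AE_mp, intro AE_I2 impI)
    fix \<omega> assume "\<forall>\<^sub>F n in sequentially. empirical (\<lambda>i. Z i \<omega>) n (- A) < 1 - c"
    then show "\<forall>\<^sub>F n in sequentially. empirical (\<lambda>i. Z i \<omega>) n A > c"
      using eventually_gt_at_top[of 0] by eventually_elim (simp add: empirical_compl)
  qed
qed




lemma Theta_T0: "Theta cX ce \<subseteq> T0"
  unfolding Theta_def T0_def using posdef_det_nz by blast

lemma Dz_nonneg:
  assumes "\<theta> \<in> Theta cX ce" shows "Dz \<theta> z \<ge> 0"
proof -
  have "mvn_density (mix_mean \<theta> g) (mix_cov \<theta> g) x \<ge> 0" for g x
    using posdef_det_pos[of "mix_cov \<theta> g"] assms
    unfolding mvn_density_def Theta_def by (auto intro!: divide_nonneg_pos)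
  then show ?thesis using assms
    unfolding Dz_def Dmix_def Dg_def Theta_def
    by (auto intro!: sum_nonneg mult_nonneg_nonneg)
qed

lemma cont_Dz:
  assumes "\<theta> \<in> T0" shows "continuous_on UNIV (Dz \<theta>)"
proof -
  have "continuous_on UNIV ((\<lambda>p. Dz (fst p) (snd p)) \<circ> (\<lambda>z. (\<theta>, z)))"
    by (rule continuous_on_compose[OF _ continuous_on_subset[OF cont_D]])
       (use assms in \<open>auto intro!: continuous_intros\<close>)
  then show ?thesis by (simp add: o_def)
qed

lemma exp_decay:
  assumes "v > 0"
  shows "((\<lambda>y::real. exp (-(y - a)\<^sup>2 / (2 * v))) \<longlongrightarrow> 0) at_top"
proof -
  have 1: "LIM y at_top. -a + y :> at_top"
    by (rule filterlim_tendsto_add_at_top[OF tendsto_const filterlim_ident])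
  have 2: "LIM y at_top. (-a + y)^2 :> at_top"
    by (rule filterlim_pow_at_top[OF _ 1]) simp
  have 3: "LIM y at_top. (-a + y)^2 * (1 / (2 * v)) :> at_top"
    by (rule filterlim_at_top_mult_tendsto_pos[OF tendsto_const _ 2]) (use assms in simp)
  have 4: "LIM y at_top. - ((-a + y)^2 * (1 / (2 * v))) :> at_bot"
    using 3 by (simp add: filterlim_uminus_at_bot)
  have "((\<lambda>y. exp (- ((-a + y)^2 * (1 / (2 * v))))) \<longlongrightarrow> 0) at_top"
    by (rule filterlim_compose[OF exp_at_bot 4])
  then show ?thesis by simp
qed

lemma tendsto_zero_helper: assumes "(e \<longlongrightarrow> 0) F" shows "((\<lambda>y. c1 * e y * c2 * (c3::real)) \<longlongrightarrow> 0) F"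
  using tendsto_mult[OF tendsto_mult[OF tendsto_mult[OF tendsto_const[of c1] assms] tendsto_const[of c2]] tendsto_const[of c3]]
  by simp
lemma Dz_decay:
  assumes "\<theta> \<in> T0"
  shows "((\<lambda>y. Dz \<theta> (x, y)) \<longlongrightarrow> 0) at_top"
proof -
  have "((\<lambda>y. Dform \<theta> (x, y)) \<longlongrightarrow> 0) at_top"
    unfolding Dform_def fst_conv snd_conv
    apply (intro tendsto_null_sum tendsto_zero_helper exp_decay)
    using assms by (auto simp: T0_def)
  then show ?thesis using Dz_Dform[OF assms] by simp
qed

definition Lset :: "('n::finite, 'g::finite) param \<Rightarrow> real \<Rightarrow> ((real^'n) \<times> real) set" where
  "Lset \<theta> u = {(x, y). Dmix \<theta> x y \<ge> u}"

lemma Lset_iff: "z \<in> Lset \<theta> u \<longleftrightarrow> u \<le> Dz \<theta> z"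
  by (simp add: Lset_def Dz_def case_prod_beta)

lemma Lset_eq: "Lset \<theta> u = {z. u \<le> Dz \<theta> z}"
  using Lset_iff by blast

lemma trim_level_Lset: "trim_level \<alpha> Q \<theta> = Sup {u. Q (Lset \<theta> u) \<ge> 1 - \<alpha>}"
  unfolding trim_level_def Lset_def ..

lemma closed_Lset: "\<theta> \<in> T0 \<Longrightarrow> closed (Lset \<theta> u)"
  unfolding Lset_eq by (intro closed_Collect_le continuous_on_const cont_Dz)

lemma Lset_borel: "\<theta> \<in> T0 \<Longrightarrow> Lset \<theta> u \<in> sets borel"
  by (intro borel_closed closed_Lset)

lemma Lset_UNIV: assumes "\<theta> \<in> Theta cX ce" "u \<le> 0" shows "Lset \<theta> u = UNIV"
proof -
  have "u \<le> Dz \<theta> z" for z using Dz_nonneg[OF assms(1), of z] assms(2) by linarith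
  then show ?thesis by (auto simp: Lset_eq)
qed




lemma level_le:
  fixes Q :: "((real^'n::finite) \<times> real) set \<Rightarrow> real" and \<alpha> :: real and \<theta> :: "('n,'g::finite) param"
  assumes mono: "\<And>u v. u \<le> v \<Longrightarrow> Q (Lset \<theta> v) \<le> Q (Lset \<theta> u)"
    and ne: "Q (Lset \<theta> u1) \<ge> 1 - \<alpha>"
    and lt: "Q (Lset \<theta> u) < 1 - \<alpha>"
  shows "trim_level \<alpha> Q \<theta> \<le> u"
  unfolding trim_level_Lset
proof (rule cSup_least)
  show "{u. 1 - \<alpha> \<le> Q (Lset \<theta> u)} \<noteq> {}" using ne by auto
next
  fix s assume "s \<in> {u. 1 - \<alpha> \<le> Q (Lset \<theta> u)}"
  then have s: "1 - \<alpha> \<le> Q (Lset \<theta> s)" by simp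
  show "s \<le> u"
  proof (rule ccontr)
    assume "\<not> s \<le> u"
    then have "Q (Lset \<theta> s) \<le> Q (Lset \<theta> u)" by (intro mono) simp
    with s lt show False by linarith
  qed
qed

lemma level_bdd:
  fixes Q :: "((real^'n::finite) \<times> real) set \<Rightarrow> real" and \<alpha> :: real and \<theta> :: "('n,'g::finite) param"
  assumes mono: "\<And>u v. u \<le> v \<Longrightarrow> Q (Lset \<theta> v) \<le> Q (Lset \<theta> u)"
    and bd: "Q (Lset \<theta> u0) < 1 - \<alpha>"
  shows "bdd_above {u. 1 - \<alpha> \<le> Q (Lset \<theta> u)}"
proof (rule bdd_aboveI)
  fix s assume "s \<in> {u. 1 - \<alpha> \<le> Q (Lset \<theta> u)}"
  then have s: "1 - \<alpha> \<le> Q (Lset \<theta> s)" by simp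
  show "s \<le> u0"
  proof (rule ccontr)
    assume "\<not> s \<le> u0"
    then have "Q (Lset \<theta> s) \<le> Q (Lset \<theta> u0)" by (intro mono) simp
    with s bd show False by linarith
  qed
qed

lemma level_ge:
  fixes Q :: "((real^'n::finite) \<times> real) set \<Rightarrow> real" and \<alpha> :: real and \<theta> :: "('n,'g::finite) param"
  assumes mono: "\<And>u v. u \<le> v \<Longrightarrow> Q (Lset \<theta> v) \<le> Q (Lset \<theta> u)"
    and bd: "Q (Lset \<theta> u0) < 1 - \<alpha>"
    and ge: "Q (Lset \<theta> u) \<ge> 1 - \<alpha>"
  shows "u \<le> trim_level \<alpha> Q \<theta>"
  unfolding trim_level_Lset
  by (rule cSup_upper) (use ge level_bdd[of Q \<theta>, OF mono bd] in auto)

lemma level_below: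
  fixes Q :: "((real^'n::finite) \<times> real) set \<Rightarrow> real" and \<alpha> :: real and \<theta> :: "('n,'g::finite) param"
  assumes mono: "\<And>u v. u \<le> v \<Longrightarrow> Q (Lset \<theta> v) \<le> Q (Lset \<theta> u)"
    and ne: "Q (Lset \<theta> u1) \<ge> 1 - \<alpha>"
    and v: "v < trim_level \<alpha> Q \<theta>"
  shows "Q (Lset \<theta> v) \<ge> 1 - \<alpha>"
proof -
  have "{u. 1 - \<alpha> \<le> Q (Lset \<theta> u)} \<noteq> {}" using ne by auto
  from less_cSupD[OF this v[unfolded trim_level_Lset]] obtain s where
    "1 - \<alpha> \<le> Q (Lset \<theta> s)" "v < s" by auto
  then show ?thesis using mono[of v s] by simp
qed

locale setting =
  fixes M :: "'a measure"
    and Z :: "nat \<Rightarrow> 'a \<Rightarrow> (real^'n::finite) \<times> real"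
    and f :: "(real^'n) \<times> real \<Rightarrow> real"
    and P :: "((real^'n) \<times> real) measure"
    and K :: "('n, 'g::finite) param set"
    and \<alpha> cX ce :: real
  assumes a0: "0 \<le> \<alpha>" and a1: "\<alpha> < 1" and cX: "cX \<ge> 1" and ce: "ce \<ge> 1"
    and M: "prob_space M"
    and fm: "f \<in> borel_measurable lborel" and fpos: "\<forall>z. f z > 0"
    and Pdef: "P = density lborel (\<lambda>z. ennreal (f z))" and PP: "prob_space P"
    and Zm: "\<forall>i. Z i \<in> measurable M borel"
    and ind: "prob_space.indep_vars M (\<lambda>_. borel) Z UNIV"
    and dist: "\<forall>i. distr M borel (Z i) = P"
    and Kc: "compact K" and KT: "K \<subseteq> Theta cX ce"
begin

interpretation P: prob_space P by (rule PP)

lemma sP: "sets P = sets borel" using dist by (metis sets_distr)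
lemma spP: "space P = UNIV" using dist by (metis space_distr space_borel)

lemma KT0: "\<theta> \<in> K \<Longrightarrow> \<theta> \<in> T0" using KT Theta_T0 by blast

lemma Lset_P: "\<theta> \<in> K \<Longrightarrow> Lset \<theta> u \<in> sets P"
  using Lset_borel[OF KT0] sP by simp

lemma P_mono: "\<theta> \<in> K \<Longrightarrow> u \<le> v \<Longrightarrow> measure P (Lset \<theta> v) \<le> measure P (Lset \<theta> u)"
  by (intro P.finite_measure_mono Lset_P) (auto simp: Lset_iff)

lemma P_one: "\<theta> \<in> K \<Longrightarrow> u \<le> 0 \<Longrightarrow> measure P (Lset \<theta> u) = 1"
  using Lset_UNIV[of \<theta> cX ce u] KT spP P.prob_space by auto

lemma P_small: assumes "\<theta> \<in> K" "\<eta> > 0" shows "\<exists>u0. measure P (Lset \<theta> u0) < \<eta>"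
proof -
  have "(\<lambda>k. measure P (Lset \<theta> (real k))) \<longlonglongrightarrow> measure P (\<Inter>k. Lset \<theta> (real k))"
    by (rule P.finite_Lim_measure_decseq) (use Lset_P[OF assms(1)] in \<open>auto simp: decseq_def Lset_iff\<close>)
  moreover have "(\<Inter>k. Lset \<theta> (real k)) = {}"
  proof -
    have "z \<notin> (\<Inter>k. Lset \<theta> (real k))" for z
    proof -
      obtain k where "Dz \<theta> z < real k" using reals_Archimedean2 by blast
      then show ?thesis by (auto simp: Lset_iff intro!: exI[of _ k])
    qed
    then show ?thesis by blast
  qed
  ultimately have "(\<lambda>k. measure P (Lset \<theta> (real k))) \<longlonglongrightarrow> 0" by simp
  then have "\<forall>\<^sub>F k in sequentially. measure P (Lset \<theta> (real k)) < \<eta>"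
    using assms(2) by (rule order_tendstoD)
  then show ?thesis by (meson eventually_sequentially order.refl)
qed

lemma P_tight: assumes "\<eta> > 0" shows "\<exists>\<rho>. measure P (- cball 0 \<rho>) < \<eta>"
proof -
  have "(\<lambda>k. measure P (- cball 0 (real k))) \<longlonglongrightarrow> measure P (\<Inter>k. - cball 0 (real k))"
    by (rule P.finite_Lim_measure_decseq) (auto simp: decseq_def sP)
  moreover have "(\<Inter>k. - cball (0::(real^'n) \<times> real) (real k)) = {}"
  proof -
    have "z \<notin> (\<Inter>k. - cball 0 (real k))" for z :: "(real^'n) \<times> real"
    proof -
      obtain k where "norm z < real k" using reals_Archimedean2 by blast
      then show ?thesis by (auto intro!: exI[of _ k])
    qed
    then show ?thesis by blast
  qed
  ultimately have "(\<lambda>k. measure P (- cball 0 (real k))) \<longlonglongrightarrow> 0" by simp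
  then have "\<forall>\<^sub>F k in sequentially. measure P (- cball 0 (real k)) < \<eta>"
    using assms by (rule order_tendstoD)
  then show ?thesis by (meson eventually_sequentially order.refl)
qed

lemma P_open_pos:
  assumes "open U" "z \<in> U" shows "measure P U > 0"
proof (rule ccontr)
  assume "\<not> measure P U > 0"
  then have "measure P U = 0" using measure_nonneg[of P U] by linarith
  then have "emeasure P U = 0"
    using assms by (simp add: P.emeasure_eq_measure)
  then have "(\<integral>\<^sup>+x. ennreal (f x) * indicator U x \<partial>lborel) = 0"
    using assms fm by (simp add: Pdef emeasure_density nn_integral_set_ennreal)
  then have "AE x in lborel. ennreal (f x) * indicator U x = 0"
    using assms fm by (subst (asm) nn_integral_0_iff_AE) auto
  then have "AE x in lborel. x \<notin> U"
    by eventually_elim (use fpos in \<open>auto simp: indicator_def ennreal_eq_0_iff not_le[symmetric]\<close>)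
  then have "emeasure lborel U = 0"
    using assms by (subst (asm) AE_iff_measurable[of U]) auto
  moreover obtain r where r: "r > 0" "ball z r \<subseteq> U" using assms open_contains_ball by blast
  moreover have "emeasure lborel (ball z r) \<le> emeasure lborel U"
    using r assms by (intro emeasure_mono) auto
  ultimately have "emeasure lborel (ball z r) = 0" by simp
  then have "Sigma_Algebra.measure lborel (ball z r) = 0" by (simp add: measure_def)
  with content_ball_pos[OF r(1), of z] show False by simp
qed

end



context setting begin

interpretation P: prob_space P by (rule PP)

definition "RP \<theta> = trim_level \<alpha> (measure P) \<theta>"

lemma P_bdd: "\<theta> \<in> K \<Longrightarrow> \<exists>u0. measure P (Lset \<theta> u0) < 1 - \<alpha>"
  using P_small a1 by simp

lemma RP_nonneg: assumes "\<theta> \<in> K" shows "0 \<le> RP \<theta>"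
proof -
  obtain u0 where "measure P (Lset \<theta> u0) < 1 - \<alpha>" using P_bdd[OF assms] by blast
  from level_ge[where Q="measure P" and \<alpha>=\<alpha> and \<theta>=\<theta> and u=0, OF P_mono[OF assms] this]
  show ?thesis unfolding RP_def using P_one[OF assms] a0 by simp
qed

lemma RP_upper: assumes "\<theta> \<in> K" "\<epsilon> > 0" shows "measure P (Lset \<theta> (RP \<theta> + \<epsilon>)) < 1 - \<alpha>"
proof (rule ccontr)
  assume "\<not> ?thesis"
  then have ge: "measure P (Lset \<theta> (RP \<theta> + \<epsilon>)) \<ge> 1 - \<alpha>" by simp
  obtain u0 where "measure P (Lset \<theta> u0) < 1 - \<alpha>" using P_bdd[OF assms(1)] by blast
  from level_ge[where Q="measure P" and \<alpha>=\<alpha> and \<theta>=\<theta> and u="RP \<theta> + \<epsilon>", OF P_mono[OF assms(1)] this ge]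
  have "RP \<theta> + \<epsilon> \<le> RP \<theta>" unfolding RP_def .
  with assms show False by simp
qed

lemma RP_strict:
  assumes th: "\<theta> \<in> K" and u: "0 < u" "u < RP \<theta>"
  shows "measure P (Lset \<theta> u) > 1 - \<alpha>"
proof -
  define u' where "u' = (u + RP \<theta>) / 2"
  have uu': "u < u'" "u' < RP \<theta>" using u by (auto simp: u'_def)
  have T0: "\<theta> \<in> T0" using KT0[OF th] .
  have "measure P (Lset \<theta> u') \<ge> 1 - \<alpha>"
    by (rule level_below[where Q="measure P" and \<alpha>=\<alpha> and \<theta>=\<theta>, OF P_mono[OF th], of 0]) (use P_one[OF th] a0 uu' in \<open>auto simp: RP_def\<close>)
  then have "Lset \<theta> u' \<noteq> {}" using a1 by auto
  then obtain z1 where z1: "u' \<le> Dz \<theta> z1" by (auto simp: Lset_iff)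
  have "\<forall>\<^sub>F y in at_top. Dz \<theta> (0, y) < u"
    using Dz_decay[OF T0, of 0] u(1) by (rule order_tendstoD)
  then obtain y where y: "Dz \<theta> (0, y) < u" by (meson eventually_at_top_linorder order.refl)
  have conn: "connected (range (Dz \<theta>))"
    by (rule connected_continuous_image[OF cont_Dz[OF T0] connected_UNIV])
  have "(u + u') / 2 \<in> {Dz \<theta> (0, y) .. Dz \<theta> z1}" using y z1 uu' by auto
  then have "(u + u') / 2 \<in> range (Dz \<theta>)"
    using connected_contains_Icc[OF conn, of "Dz \<theta> (0, y)" "Dz \<theta> z1"] by auto
  then obtain z where z: "Dz \<theta> z = (u + u') / 2" by auto
  define U where "U = {z. u < Dz \<theta> z} \<inter> {z. Dz \<theta> z < u'}"
  have oU: "open U" unfolding U_def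
    by (intro open_Int open_Collect_less continuous_on_const cont_Dz[OF T0])
  have "z \<in> U" using z uu' by (auto simp: U_def)
  then have pU: "measure P U > 0" by (rule P_open_pos[OF oU])
  have UP: "U \<in> sets P" using oU sP by simp
  have "measure P (Lset \<theta> u' \<union> U) = measure P (Lset \<theta> u') + measure P U"
    by (rule P.finite_measure_Union[OF Lset_P[OF th] UP]) (auto simp: U_def Lset_iff)
  moreover have "measure P (Lset \<theta> u' \<union> U) \<le> measure P (Lset \<theta> u)"
    by (rule P.finite_measure_mono) (use Lset_P[OF th] uu' in \<open>auto simp: U_def Lset_iff\<close>)
  ultimately show ?thesis using pU \<open>measure P (Lset \<theta> u') \<ge> 1 - \<alpha>\<close> by linarith
qed

end



lemma emp_sub:
  assumes "A \<subseteq> B \<union> D"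
  shows "empirical Z n A \<le> empirical Z n B + empirical Z n D"
proof -
  have "{i\<in>{1..n}. Z i \<in> A} \<subseteq> {i\<in>{1..n}. Z i \<in> B} \<union> {i\<in>{1..n}. Z i \<in> D}" using assms by auto
  then have "card {i\<in>{1..n}. Z i \<in> A} \<le> card ({i\<in>{1..n}. Z i \<in> B} \<union> {i\<in>{1..n}. Z i \<in> D})"
    by (intro card_mono) auto
  also have "\<dots> \<le> card {i\<in>{1..n}. Z i \<in> B} + card {i\<in>{1..n}. Z i \<in> D}" by (rule card_Un_le)
  finally have "real (card {i\<in>{1..n}. Z i \<in> A}) \<le> real (card {i\<in>{1..n}. Z i \<in> B}) + real (card {i\<in>{1..n}. Z i \<in> D})"
    by linarith
  then show ?thesis unfolding empirical_def by (simp add: add_divide_distrib[symmetric] divide_right_mono)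
qed

lemma emp_empty: "empirical Z n {} = 0" by (simp add: empirical_def)

lemma emp_mono: "A \<subseteq> B \<Longrightarrow> empirical Z n A \<le> empirical Z n B"
  using emp_sub[of A B "{}" Z n] by (simp add: emp_empty)

lemma emp_UNIV: assumes "n > 0" shows "empirical Z n UNIV = 1"
proof -
  have "{i\<in>{1..n}. Z i \<in> UNIV} = {1..n}" by auto
  then show ?thesis using assms unfolding empirical_def by simp
qed

lemma emp_bdd: "n > 0 \<Longrightarrow> \<exists>u0. empirical Z n (Lset \<theta> u0) = 0"
proof -
  define u0 where "u0 = 1 + (\<Sum>i\<in>{1..n}. \<bar>Dz \<theta> (Z i)\<bar>)"
  have "Dz \<theta> (Z i) < u0" if "i \<in> {1..n}" for i
  proof -
    have "\<bar>Dz \<theta> (Z i)\<bar> \<le> (\<Sum>i\<in>{1..n}. \<bar>Dz \<theta> (Z i)\<bar>)"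
      using that by (intro member_le_sum) auto
    then show ?thesis by (simp add: u0_def)
  qed
  then have "{i\<in>{1..n}. Z i \<in> Lset \<theta> u0} = {}" by (force simp: Lset_iff)
  then show ?thesis by (auto simp: empirical_def)
qed

lemma bracket_up:
  fixes Q :: "((real^'n::finite) \<times> real) set \<Rightarrow> real" and \<theta> \<theta>0 :: "('n,'g::finite) param"
  assumes mono: "\<And>u v. u \<le> v \<Longrightarrow> Q (Lset \<theta> v) \<le> Q (Lset \<theta> u)"
    and sub: "\<And>A B D. A \<subseteq> B \<union> D \<Longrightarrow> A \<in> sets borel \<Longrightarrow> B \<in> sets borel \<Longrightarrow> D \<in> sets borel \<Longrightarrow> Q A \<le> Q B + Q D"
    and b1: "\<And>u. Lset \<theta> u \<in> sets borel" and b2: "\<And>u. Lset \<theta>0 u \<in> sets borel" and b3: "- C \<in> sets borel"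
    and close: "\<forall>z\<in>C. \<bar>Dz \<theta> z - Dz \<theta>0 z\<bar> < \<epsilon>"
    and ne: "Q (Lset \<theta> u1) \<ge> 1 - \<alpha>"
    and lt: "Q (Lset \<theta>0 u) + Q (- C) < 1 - \<alpha>"
  shows "trim_level \<alpha> Q \<theta> \<le> u + \<epsilon>"
proof (rule level_le[where Q=Q and \<theta>=\<theta> and \<alpha>=\<alpha>, OF mono ne])
  have "Lset \<theta> (u + \<epsilon>) \<subseteq> Lset \<theta>0 u \<union> - C"
  proof
    fix z assume z: "z \<in> Lset \<theta> (u + \<epsilon>)"
    show "z \<in> Lset \<theta>0 u \<union> - C"
    proof (cases "z \<in> C")
      case True
      then have "\<bar>Dz \<theta> z - Dz \<theta>0 z\<bar> < \<epsilon>" using close by auto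
      then show ?thesis using z by (auto simp: Lset_iff)
    qed auto
  qed
  then have "Q (Lset \<theta> (u + \<epsilon>)) \<le> Q (Lset \<theta>0 u) + Q (- C)" by (intro sub b1 b2 b3)
  then show "Q (Lset \<theta> (u + \<epsilon>)) < 1 - \<alpha>" using lt by linarith
qed

lemma bracket_low:
  fixes Q :: "((real^'n::finite) \<times> real) set \<Rightarrow> real" and \<theta> \<theta>0 :: "('n,'g::finite) param"
  assumes mono: "\<And>u v. u \<le> v \<Longrightarrow> Q (Lset \<theta> v) \<le> Q (Lset \<theta> u)"
    and sub: "\<And>A B D. A \<subseteq> B \<union> D \<Longrightarrow> A \<in> sets borel \<Longrightarrow> B \<in> sets borel \<Longrightarrow> D \<in> sets borel \<Longrightarrow> Q A \<le> Q B + Q D"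
    and b1: "\<And>u. Lset \<theta> u \<in> sets borel" and b2: "\<And>u. Lset \<theta>0 u \<in> sets borel" and b3: "- C \<in> sets borel"
    and close: "\<forall>z\<in>C. \<bar>Dz \<theta> z - Dz \<theta>0 z\<bar> < \<epsilon>"
    and bd: "Q (Lset \<theta> u0) < 1 - \<alpha>"
    and ge: "Q (Lset \<theta>0 u) - Q (- C) \<ge> 1 - \<alpha>"
  shows "u - \<epsilon> \<le> trim_level \<alpha> Q \<theta>"
proof (rule level_ge[where Q=Q and \<theta>=\<theta> and \<alpha>=\<alpha>, OF mono bd])
  have "Lset \<theta>0 u \<subseteq> Lset \<theta> (u - \<epsilon>) \<union> - C"
  proof
    fix z assume z: "z \<in> Lset \<theta>0 u"
    show "z \<in> Lset \<theta> (u - \<epsilon>) \<union> - C"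
    proof (cases "z \<in> C")
      case True
      then have "\<bar>Dz \<theta> z - Dz \<theta>0 z\<bar> < \<epsilon>" using close by auto
      then show ?thesis using z by (auto simp: Lset_iff)
    qed auto
  qed
  then have "Q (Lset \<theta>0 u) \<le> Q (Lset \<theta> (u - \<epsilon>)) + Q (- C)" by (intro sub b1 b2 b3)
  then show "Q (Lset \<theta> (u - \<epsilon>)) \<ge> 1 - \<alpha>" using ge by linarith
qed




context setting begin

interpretation P: prob_space P by (rule PP)

lemma Lset_borelK: "\<theta> \<in> K \<Longrightarrow> Lset \<theta> u \<in> sets borel"
  using Lset_borel[OF KT0] .

lemma P_sub:
  assumes "A \<subseteq> B \<union> D" "A \<in> sets borel" "B \<in> sets borel" "D \<in> sets borel"
  shows "measure P A \<le> measure P B + measure P D"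
proof -
  have "measure P A \<le> measure P (B \<union> D)"
    using assms sP by (intro P.finite_measure_mono) auto
  also have "\<dots> \<le> measure P B + measure P D"
    using assms sP by (intro measure_Un_le) auto
  finally show ?thesis .
qed

lemma local_bound:
  assumes th0: "\<theta>0 \<in> K" and e: "\<epsilon> > 0"
  shows "\<exists>\<delta>>0. AE \<omega> in M. \<forall>\<^sub>F n in sequentially. \<forall>\<theta>\<in>K. dist \<theta> \<theta>0 < \<delta> \<longrightarrow>
           \<bar>trim_level \<alpha> (empirical (\<lambda>i. Z i \<omega>) n) \<theta> - RP \<theta>\<bar> \<le> 4 * \<epsilon>"
proof -
  define r where "r = RP \<theta>0"
  define \<beta> where "\<beta> = 1 - \<alpha>"
  have \<beta>: "\<beta> > 0" using a1 by (simp add: \<beta>_def)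
  define ghi where "ghi = \<beta> - measure P (Lset \<theta>0 (r + \<epsilon>))"
  have ghi: "ghi > 0" using RP_upper[OF th0 e] by (simp add: ghi_def \<beta>_def r_def)
  define glo where "glo = (if r - \<epsilon> > 0 then measure P (Lset \<theta>0 (r - \<epsilon>)) - \<beta> else 1)"
  have glo: "glo > 0" using RP_strict[OF th0, of "r - \<epsilon>"] e by (auto simp: glo_def \<beta>_def r_def)
  define \<gamma> where "\<gamma> = min ghi glo"
  have \<gamma>: "\<gamma> > 0" "\<gamma> \<le> ghi" "\<gamma> \<le> glo" using ghi glo by (auto simp: \<gamma>_def)
  obtain \<rho> where \<rho>: "measure P (- cball 0 \<rho>) < \<gamma> / 4" using P_tight[of "\<gamma> / 4"] \<gamma> by auto
  define C where "C = cball (0::(real^'n) \<times> real) \<rho>"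
  have Cb: "- C \<in> sets borel" by (simp add: C_def borel_open open_Compl)
  have "compact (K \<times> C)" using Kc by (simp add: C_def compact_Times)
  moreover have "continuous_on (K \<times> C) (\<lambda>p. Dz (fst p) (snd p))"
    by (rule continuous_on_subset[OF cont_D]) (use KT0 in auto)
  ultimately have uc: "uniformly_continuous_on (K \<times> C) (\<lambda>p. Dz (fst p) (snd p))"
    by (intro compact_uniformly_continuous)
  then obtain \<delta> where \<delta>: "\<delta> > 0" and d\<delta>: "\<And>x x'. x \<in> K \<times> C \<Longrightarrow> x' \<in> K \<times> C \<Longrightarrow> dist x' x < \<delta> \<Longrightarrow>
      dist (Dz (fst x') (snd x')) (Dz (fst x) (snd x)) < \<epsilon>"
    using e unfolding uniformly_continuous_on_def by metis
  have close: "\<forall>z\<in>C. \<bar>Dz \<theta> z - Dz \<theta>0 z\<bar> < \<epsilon>" if th: "\<theta> \<in> K" "dist \<theta> \<theta>0 < \<delta>" for \<theta>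
  proof
    fix z assume z: "z \<in> C"
    have "dist (\<theta>, z) (\<theta>0, z) < \<delta>" using th by (simp add: dist_Pair_Pair)
    from d\<delta>[of "(\<theta>0, z)" "(\<theta>, z)", OF _ _ this] have "dist (Dz \<theta> z) (Dz \<theta>0 z) < \<epsilon>"
      using z th th0 by auto
    then show "\<bar>Dz \<theta> z - Dz \<theta>0 z\<bar> < \<epsilon>" by (simp add: dist_real_def)
  qed
  have E1: "AE \<omega> in M. \<forall>\<^sub>F n in sequentially. empirical (\<lambda>i. Z i \<omega>) n (Lset \<theta>0 (r + \<epsilon>)) < \<beta> - 3 * \<gamma> / 4"
    by (rule slln_upper[OF M Zm ind dist Lset_borelK[OF th0]]) (use \<gamma> in \<open>simp add: ghi_def\<close>)
  have E2: "AE \<omega> in M. \<forall>\<^sub>F n in sequentially. empirical (\<lambda>i. Z i \<omega>) n (- C) < \<gamma> / 2"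
    by (rule slln_upper[OF M Zm ind dist Cb]) (use \<rho> \<gamma> in \<open>simp add: C_def\<close>)
  have E3: "AE \<omega> in M. \<forall>\<^sub>F n in sequentially.
      r - \<epsilon> > 0 \<longrightarrow> empirical (\<lambda>i. Z i \<omega>) n (Lset \<theta>0 (r - \<epsilon>)) > \<beta> + 3 * \<gamma> / 4"
  proof (cases "r - \<epsilon> > 0")
    case True
    have "AE \<omega> in M. \<forall>\<^sub>F n in sequentially. empirical (\<lambda>i. Z i \<omega>) n (Lset \<theta>0 (r - \<epsilon>)) > \<beta> + 3 * \<gamma> / 4"
      by (rule slln_lower[OF M Zm ind dist PP Lset_borelK[OF th0]]) (use \<gamma> True in \<open>simp add: glo_def\<close>)
    then show ?thesis by (auto elim: eventually_mono)
  next
    case False then show ?thesis by simp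
  qed
  have sub_n: "\<And>A B D. A \<subseteq> B \<union> D \<Longrightarrow> A \<in> sets borel \<Longrightarrow> B \<in> sets borel \<Longrightarrow> D \<in> sets borel \<Longrightarrow>
      empirical Zs n A \<le> empirical Zs n B + empirical Zs n D" for Zs n
    by (rule emp_sub)
  have sub_P: "\<And>A B D. A \<subseteq> B \<union> D \<Longrightarrow> A \<in> sets borel \<Longrightarrow> B \<in> sets borel \<Longrightarrow> D \<in> sets borel \<Longrightarrow>
      measure P A \<le> measure P B + measure P D"
    by (rule P_sub)
  show ?thesis
  proof (rule exI[of _ \<delta>], intro conjI[OF \<delta>])
    show "AE \<omega> in M. \<forall>\<^sub>F n in sequentially. \<forall>\<theta>\<in>K. dist \<theta> \<theta>0 < \<delta> \<longrightarrow>
           \<bar>trim_level \<alpha> (empirical (\<lambda>i. Z i \<omega>) n) \<theta> - RP \<theta>\<bar> \<le> 4 * \<epsilon>"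
      using E1 E2 E3
    proof eventually_elim
      case (elim \<omega>)
      show ?case using elim(1) elim(2) elim(3) eventually_gt_at_top[of 0]
      proof eventually_elim
        case (elim n)
        show ?case
        proof (intro ballI impI)
          fix \<theta> assume th: "\<theta> \<in> K" and d: "dist \<theta> \<theta>0 < \<delta>"
          define Qn where "Qn = empirical (\<lambda>i. Z i \<omega>) n"
          have cl: "\<forall>z\<in>C. \<bar>Dz \<theta> z - Dz \<theta>0 z\<bar> < \<epsilon>" using close[OF th d] .
          have mono_n: "\<And>u v. u \<le> v \<Longrightarrow> Qn (Lset \<theta> v) \<le> Qn (Lset \<theta> u)"
            unfolding Qn_def by (intro emp_mono) (auto simp: Lset_iff)
          have ne_n: "Qn (Lset \<theta> 0) \<ge> 1 - \<alpha>"
          proof -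
            have "Lset \<theta> 0 = UNIV" using Lset_UNIV[of \<theta> cX ce 0] th KT by auto
            then show ?thesis using emp_UNIV[where n=n and Z="\<lambda>i. Z i \<omega>", OF elim(4)] a0 by (simp add: Qn_def)
          qed
          obtain u0 where u0: "Qn (Lset \<theta> u0) = 0" using emp_bdd[OF elim(4)] unfolding Qn_def by blast
          then have bd_n: "Qn (Lset \<theta> u0) < 1 - \<alpha>" using a1 by simp
          obtain v0 where bd_P: "measure P (Lset \<theta> v0) < 1 - \<alpha>" using P_bdd[OF th] by blast
          have ne_P: "measure P (Lset \<theta> 0) \<ge> 1 - \<alpha>" using P_one[OF th] a0 by simp
          have up_n: "trim_level \<alpha> Qn \<theta> \<le> (r + \<epsilon>) + \<epsilon>"
            by (rule bracket_up[where Q=Qn and \<theta>=\<theta> and \<theta>0=\<theta>0 and C=C, OF mono_n _ Lset_borelK[OF th]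
                  Lset_borelK[OF th0] Cb cl ne_n])
               (use elim(1,2) \<gamma> in \<open>auto simp: Qn_def \<beta>_def intro: emp_sub\<close>)
          have up_P: "RP \<theta> \<le> (r + \<epsilon>) + \<epsilon>" unfolding RP_def
            by (rule bracket_up[where Q="measure P" and \<theta>=\<theta> and \<theta>0=\<theta>0 and C=C, OF P_mono[OF th] _ Lset_borelK[OF th]
                  Lset_borelK[OF th0] Cb cl ne_P])
               (use \<rho> \<gamma> in \<open>auto simp: C_def ghi_def \<beta>_def intro: P_sub\<close>)
          have low: "r - 2 * \<epsilon> \<le> trim_level \<alpha> Qn \<theta> \<and> r - 2 * \<epsilon> \<le> RP \<theta>"
          proof (cases "r - \<epsilon> > 0")
            case True
            have "(r - \<epsilon>) - \<epsilon> \<le> trim_level \<alpha> Qn \<theta>"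
              by (rule bracket_low[where Q=Qn and \<theta>=\<theta> and \<theta>0=\<theta>0 and C=C, OF mono_n _ Lset_borelK[OF th]
                    Lset_borelK[OF th0] Cb cl bd_n])
                 (use elim(2,3) \<gamma> True in \<open>auto simp: Qn_def \<beta>_def intro: emp_sub\<close>)
            moreover have "(r - \<epsilon>) - \<epsilon> \<le> RP \<theta>" unfolding RP_def
              by (rule bracket_low[where Q="measure P" and \<theta>=\<theta> and \<theta>0=\<theta>0 and C=C, OF P_mono[OF th] _
                    Lset_borelK[OF th] Lset_borelK[OF th0] Cb cl bd_P])
                 (use \<rho> \<gamma> True in \<open>auto simp: C_def glo_def \<beta>_def intro: P_sub\<close>)
            ultimately show ?thesis by simp
          next
            case False
            have "0 \<le> trim_level \<alpha> Qn \<theta>"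
              by (rule level_ge[where Q=Qn and \<alpha>=\<alpha> and \<theta>=\<theta>, OF mono_n bd_n ne_n])
            moreover have "0 \<le> RP \<theta>" by (rule RP_nonneg[OF th])
            ultimately show ?thesis using False e by linarith
          qed
          show "\<bar>trim_level \<alpha> (empirical (\<lambda>i. Z i \<omega>) n) \<theta> - RP \<theta>\<bar> \<le> 4 * \<epsilon>"
            using up_n up_P low unfolding Qn_def by linarith
        qed
      qed
    qed
  qed
qed

end



context setting begin

lemma global_bound:
  assumes e: "\<epsilon> > 0"
  shows "AE \<omega> in M. \<forall>\<^sub>F n in sequentially. \<forall>\<theta>\<in>K.
           \<bar>trim_level \<alpha> (empirical (\<lambda>i. Z i \<omega>) n) \<theta> - RP \<theta>\<bar> \<le> 4 * \<epsilon>"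
proof -
  have "\<forall>\<theta>0\<in>K. \<exists>\<delta>>0. AE \<omega> in M. \<forall>\<^sub>F n in sequentially. \<forall>\<theta>\<in>K. dist \<theta> \<theta>0 < \<delta> \<longrightarrow>
           \<bar>trim_level \<alpha> (empirical (\<lambda>i. Z i \<omega>) n) \<theta> - RP \<theta>\<bar> \<le> 4 * \<epsilon>"
    using local_bound e by blast
  then have "\<exists>d. \<forall>\<theta>0\<in>K. d \<theta>0 > 0 \<and> (AE \<omega> in M. \<forall>\<^sub>F n in sequentially. \<forall>\<theta>\<in>K.
      dist \<theta> \<theta>0 < d \<theta>0 \<longrightarrow> \<bar>trim_level \<alpha> (empirical (\<lambda>i. Z i \<omega>) n) \<theta> - RP \<theta>\<bar> \<le> 4 * \<epsilon>)"
    by (rule bchoice)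
  then obtain d where d: "\<And>\<theta>0. \<theta>0 \<in> K \<Longrightarrow> d \<theta>0 > 0 \<and> (AE \<omega> in M. \<forall>\<^sub>F n in sequentially. \<forall>\<theta>\<in>K.
      dist \<theta> \<theta>0 < d \<theta>0 \<longrightarrow> \<bar>trim_level \<alpha> (empirical (\<lambda>i. Z i \<omega>) n) \<theta> - RP \<theta>\<bar> \<le> 4 * \<epsilon>)"
    by blast
  have cov: "K \<subseteq> (\<Union>\<theta>0\<in>K. ball \<theta>0 (d \<theta>0))"
    using d by (auto intro!: bexI)
  obtain T where T: "T \<subseteq> K" "finite T" "K \<subseteq> (\<Union>\<theta>0\<in>T. ball \<theta>0 (d \<theta>0))"
    by (rule compactE_image[OF Kc _ cov]) auto
  have "AE \<omega> in M. \<forall>\<theta>0\<in>T. \<forall>\<^sub>F n in sequentially. \<forall>\<theta>\<in>K.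
      dist \<theta> \<theta>0 < d \<theta>0 \<longrightarrow> \<bar>trim_level \<alpha> (empirical (\<lambda>i. Z i \<omega>) n) \<theta> - RP \<theta>\<bar> \<le> 4 * \<epsilon>"
    by (rule AE_finite_allI[OF T(2)]) (use d T(1) in blast)
  then show ?thesis
  proof (rule AE_mp, intro AE_I2 impI)
    fix \<omega> assume h: "\<forall>\<theta>0\<in>T. \<forall>\<^sub>F n in sequentially. \<forall>\<theta>\<in>K.
      dist \<theta> \<theta>0 < d \<theta>0 \<longrightarrow> \<bar>trim_level \<alpha> (empirical (\<lambda>i. Z i \<omega>) n) \<theta> - RP \<theta>\<bar> \<le> 4 * \<epsilon>"
    have "\<forall>\<^sub>F n in sequentially. \<forall>\<theta>0\<in>T. \<forall>\<theta>\<in>K.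
      dist \<theta> \<theta>0 < d \<theta>0 \<longrightarrow> \<bar>trim_level \<alpha> (empirical (\<lambda>i. Z i \<omega>) n) \<theta> - RP \<theta>\<bar> \<le> 4 * \<epsilon>"
      by (rule eventually_ball_finite[OF T(2) h])
    then show "\<forall>\<^sub>F n in sequentially. \<forall>\<theta>\<in>K.
           \<bar>trim_level \<alpha> (empirical (\<lambda>i. Z i \<omega>) n) \<theta> - RP \<theta>\<bar> \<le> 4 * \<epsilon>"
    proof eventually_elim
      case (elim n)
      show ?case
      proof
        fix \<theta> assume th: "\<theta> \<in> K"
        then obtain \<theta>0 where "\<theta>0 \<in> T" "\<theta> \<in> ball \<theta>0 (d \<theta>0)" using T(3) by blast
        then show "\<bar>trim_level \<alpha> (empirical (\<lambda>i. Z i \<omega>) n) \<theta> - RP \<theta>\<bar> \<le> 4 * \<epsilon>"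
          using elim th by (auto simp: dist_commute)
      qed
    qed
  qed
qed

lemma final:
  "AE \<omega> in M. \<forall>\<epsilon>>0. \<forall>\<^sub>F n in sequentially. \<forall>\<theta>\<in>K.
           \<bar>trim_level \<alpha> (empirical (\<lambda>i. Z i \<omega>) n) \<theta> - trim_level \<alpha> (measure P) \<theta>\<bar> \<le> \<epsilon>"
proof -
  have "\<forall>m::nat. AE \<omega> in M. \<forall>\<^sub>F n in sequentially. \<forall>\<theta>\<in>K.
           \<bar>trim_level \<alpha> (empirical (\<lambda>i. Z i \<omega>) n) \<theta> - RP \<theta>\<bar> \<le> 4 * (inverse (real (Suc m)) / 4)"
    by (intro allI global_bound) simp
  then have "AE \<omega> in M. \<forall>m::nat. \<forall>\<^sub>F n in sequentially. \<forall>\<theta>\<in>K.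
           \<bar>trim_level \<alpha> (empirical (\<lambda>i. Z i \<omega>) n) \<theta> - RP \<theta>\<bar> \<le> inverse (real (Suc m))"
    by (simp add: AE_all_countable)
  then show ?thesis
  proof (rule AE_mp, intro AE_I2 impI allI)
    fix \<omega> and \<epsilon> :: real
    assume h: "\<forall>m::nat. \<forall>\<^sub>F n in sequentially. \<forall>\<theta>\<in>K.
           \<bar>trim_level \<alpha> (empirical (\<lambda>i. Z i \<omega>) n) \<theta> - RP \<theta>\<bar> \<le> inverse (real (Suc m))"
    assume "\<epsilon> > 0"
      then obtain m0 where m0: "0 < m0" "inverse (real m0) < \<epsilon>" using ex_inverse_of_nat_less by blast
      define m where "m = m0 - 1"
      have m: "inverse (real (Suc m)) < \<epsilon>" using m0 by (simp add: m_def)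
      show "\<forall>\<^sub>F n in sequentially. \<forall>\<theta>\<in>K.
           \<bar>trim_level \<alpha> (empirical (\<lambda>i. Z i \<omega>) n) \<theta> - trim_level \<alpha> (measure P) \<theta>\<bar> \<le> \<epsilon>"
        using h[rule_format, of m] by eventually_elim (use m in \<open>force simp: RP_def\<close>)
  qed
qed

end

theorem lemma8:
  fixes M :: "'a measure"
    and Z :: "nat \<Rightarrow> 'a \<Rightarrow> (real^'n::finite) \<times> real"
    and f :: "(real^'n) \<times> real \<Rightarrow> real"
    and P :: "((real^'n) \<times> real) measure"
    and K :: "('n, 'g::finite) param set"
    and \<alpha> cX ce :: real
  assumes "0 \<le> \<alpha>" "\<alpha> < 1" "cX \<ge> 1" "ce \<ge> 1"
    and "prob_space M"
    and "f \<in> borel_measurable lborel" "\<forall>z. f z > 0"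
    and "P = density lborel (\<lambda>z. ennreal (f z))" "prob_space P"
    and "\<forall>i. Z i \<in> measurable M borel"
    and "prob_space.indep_vars M (\<lambda>_. borel) Z UNIV"
    and "\<forall>i. distr M borel (Z i) = P"
    and "compact K" "K \<subseteq> Theta cX ce"
  shows "AE \<omega> in M. \<forall>\<epsilon>>0. \<forall>\<^sub>F n in sequentially. \<forall>\<theta>\<in>K.
           \<bar>trim_level \<alpha> (empirical (\<lambda>i. Z i \<omega>) n) \<theta> - trim_level \<alpha> (measure P) \<theta>\<bar> \<le> \<epsilon>"
proof -
  interpret S: setting M Z f P K \<alpha> cX ce
    by (intro setting.intro) (fact assms)+
  show ?thesis by (rule S.final)
qed



end
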